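(* Let $m\ge 1$, $x_0=(x_{0,1},\dots,x_{0,m})\in\mathbb{R}^m$, let $f\in C([0,+\infty[\times\mathbb{R}^{2m},\mathbb{R}^m)$ be locally Lipschitz with respect to the second variable, and let $g_1,\dots,g_m\in C(\mathbb{R})$ be locally Lipschitz on $\mathbb{R}$. Fix $\alpha>0$ and $T>0$, put $I_i:=[x_{0,i}-\alpha,x_{0,i}+\alpha]$ for $i=1,\dots,m$, $Q:=\prod_{i=1}^m I_i$ and $G:=\prod_{i=1}^m g_i(I_i)$, and set \[ M_{\alpha,T}:=\max\{\|f(t,u,v)\| : t\in[0,T],\ u\in Q,\ v\in G\}, \] assuming $M_{\alpha,T}>0$. Let $L_{\alpha,T}>0$ and $L_\alpha>0$ be such that for every $t\in[0,T]$, $u_1,u_2\in Q$, $v_1,v_2\in G$, \[ \|f(t,u_1,v_1)-f(t,u_2,v_2)\|\le L_{\alpha,T}\big(\|u_1-u_2\|+\|v_1-v_2\|\big), \] and for every $i=1,\dots,m$ and all $x,y\in I_i$, $|g_i(x)-g_i(y)|\le L_\alpha|x-y|$. Then for every \[ 0<\overline T<\min\Big\{\frac{\alpha}{M_{\alpha,T}},\ \frac{1}{L_{\alpha,T}(1+L_\alpha\sqrt m)},\ T\Big\} \] there exists $x=(x_1,\dots,x_m)\in C^1([0,\overline T];\mathbb{R}^m)$ solving \[ \dot x(t)=f\Big(t,x(t),\max_{s\in[0,t]}g_1(x_1(s)),\dots,\max_{s\in[0,t]}g_m(x_m(s))\Big),\quad t\in[0,\overline T],\qquad x(0)=x_0.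 \]
   Context: $\|\cdot\|$ denotes the Euclidean norm on $\mathbb{R}^m$. The function $f$ is evaluated as $f(t,u,v)$ with $t\ge0$, $u\in\mathbb{R}^m$, $v\in\mathbb{R}^m$. *)

theory Defs
  imports "HOL-Analysis.Analysis"
begin

definition locally_lipschitz_on :: "real set \<Rightarrow> (real \<Rightarrow> real) \<Rightarrow> bool" where
  "locally_lipschitz_on S h \<longleftrightarrow>
     (\<forall>x\<in>S. \<exists>e>0. \<exists>L. L-lipschitz_on (cball x e \<inter> S) h)"

end

theory Submission
  imports Defs
begin
lemma sup_shift:
  fixes a b :: "'x \<Rightarrow> real"
  assumes "A \<noteq> {}" "bdd_above (b ` B)" "\<And>r. r \<in> A \<Longrightarrow> \<exists>r'\<in>B. a r \<le> b r' + c"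
  shows "Sup (a ` A) \<le> Sup (b ` B) + c"
proof (rule cSUP_least[OF assms(1)])
  fix r assume "r \<in> A"
  then obtain r' where "r' \<in> B" "a r \<le> b r' + c" using assms(3) by blast
  moreover have "b r' \<le> Sup (b ` B)" using cSUP_upper[OF \<open>r' \<in> B\<close> assms(2)] .
  ultimately show "a r \<le> Sup (b ` B) + c" by linarith
qed

lemma cont_bdd_above:
  fixes h :: "real \<Rightarrow> real"
  assumes "continuous_on {a..b} h"
  shows "bdd_above (h ` {a..b})"
  by (meson assms bounded_imp_bdd_above compact_Icc compact_continuous_image compact_imp_bounded)

lemma eval_cont:
  "continuous_on UNIV (\<lambda>\<phi>::'a::metric_space \<Rightarrow>\<^sub>C 'b::metric_space. apply_bcontfun \<phi> s)"
proof -
  have "1-lipschitz_on UNIV (\<lambda>\<phi>::'a \<Rightarrow>\<^sub>C 'b. apply_bcontfun \<phi> s)"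
    unfolding lipschitz_on_def by (simp add: dist_bounded)
  then show ?thesis by (rule lipschitz_on_continuous_on)
qed

lemma norm_vec_bound:
  fixes x :: "real^'m"
  assumes "\<And>i. \<bar>x $ i\<bar> \<le> c"
  shows "norm x \<le> sqrt (real CARD('m)) * c"
proof -
  have c0: "0 \<le> c" using assms[of undefined] by linarith
  have "norm x = sqrt (\<Sum>i\<in>UNIV. (x $ i)^2)"
    by (simp add: norm_vec_def L2_set_def)
  also have "\<dots> \<le> sqrt (\<Sum>i\<in>(UNIV::'m set). c^2)"
    apply (rule real_sqrt_le_mono, rule sum_mono)
    using assms by (metis abs_ge_zero power2_abs power_mono)
  also have "\<dots> = sqrt (real CARD('m)) * c"
    using c0 by (simp add: real_sqrt_mult)
  finally show ?thesis .
qed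

theorem mainTheorem1:
  fixes f :: "real \<Rightarrow> real^'m \<Rightarrow> real^'m \<Rightarrow> real^'m"
    and g :: "'m \<Rightarrow> real \<Rightarrow> real"
    and x0 :: "real^'m"
    and \<alpha> T M LT La Tb :: real
    and I :: "'m \<Rightarrow> real set"
    and Q G :: "(real^'m) set"
  assumes f_cont: "continuous_on ({0..} \<times> UNIV \<times> UNIV) (\<lambda>(t, u, v). f t u v)"
    and f_loc_lip: "local_lipschitz {0..} UNIV (\<lambda>t (u, v). f t u v)"
    and g_cont: "\<And>i. continuous_on UNIV (g i)"
    and g_loc_lip: "\<And>i. locally_lipschitz_on UNIV (g i)"
    and \<alpha>_pos: "\<alpha> > 0" and T_pos: "T > 0"
    and I_def: "\<And>i. I i = {x0 $ i - \<alpha> .. x0 $ i + \<alpha>}"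
    and Q_def: "Q = {u. \<forall>i. u $ i \<in> I i}"
    and G_def: "G = {v. \<forall>i. v $ i \<in> g i ` I i}"
    and M_def: "M = Sup {norm (f t u v) | t u v. t \<in> {0..T} \<and> u \<in> Q \<and> v \<in> G}"
    and M_pos: "M > 0"
    and LT_pos: "LT > 0" and La_pos: "La > 0"
    and f_lip: "\<And>t u1 u2 v1 v2. t \<in> {0..T} \<Longrightarrow> u1 \<in> Q \<Longrightarrow> u2 \<in> Q \<Longrightarrow>
                 v1 \<in> G \<Longrightarrow> v2 \<in> G \<Longrightarrow>
                 norm (f t u1 v1 - f t u2 v2) \<le> LT * (norm (u1 - u2) + norm (v1 - v2))"
    and g_lip: "\<And>i x y. x \<in> I i \<Longrightarrow> y \<in> I i \<Longrightarrow> \<bar>g i x - g i y\<bar> \<le> La * \<bar>x - y\<bar>"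
    and Tb_pos: "0 < Tb"
    and Tb_bound: "Tb < Min {\<alpha> / M, 1 / (LT * (1 + La * sqrt (real CARD('m)))), T}"
  shows "\<exists>x x' :: real \<Rightarrow> real^'m.
           continuous_on {0..Tb} x' \<and>
           x 0 = x0 \<and>
           (\<forall>t\<in>{0..Tb}. (x has_vector_derivative x' t) (at t within {0..Tb}) \<and>
              x' t = f t (x t) (\<chi> i. Sup ((\<lambda>s. g i (x s $ i)) ` {0..t})))"
proof -
  define m where "m = real CARD('m)"
  define c where "c = Tb * (LT * (1 + La * sqrt m))"
  have Tb_lt: "Tb < \<alpha> / M" "Tb < 1 / (LT * (1 + La * sqrt m))" "Tb < T"
    using Tb_bound by (auto simp: m_def)
  have M0: "0 \<le> M" using M_pos by simp
  have K0: "0 < LT * (1 + La * sqrt m)" using LT_pos La_pos by (intro mult_pos_pos add_pos_nonneg) (auto simp: m_def)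
  have c0: "0 \<le> c" using Tb_pos K0 by (simp add: c_def)
  have c1: "c < 1" using Tb_lt(2) K0 by (simp add: c_def field_simps)
  have MTb: "M * Tb \<le> \<alpha>" using Tb_lt(1) M_pos by (simp add: field_simps)
  have QI: "Q = cbox (\<chi> i. x0 $ i - \<alpha>) (\<chi> i. x0 $ i + \<alpha>)"
    by (auto simp: Q_def I_def mem_box_cart)
  have "\<forall>i. \<exists>B. \<forall>y\<in>g i ` I i. \<bar>y\<bar> \<le> B"
  proof
    fix i
    have "compact (g i ` I i)"
      by (metis I_def compact_Icc compact_continuous_image continuous_on_subset g_cont subset_UNIV)
    then show "\<exists>B. \<forall>y\<in>g i ` I i. \<bar>y\<bar> \<le> B"
      using compact_imp_bounded bounded_real by blast
  qed
  then obtain B where B: "\<And>i y. y \<in> g i ` I i \<Longrightarrow> \<bar>y\<bar> \<le> B i" by metis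
  have GB: "G \<subseteq> cbox (\<chi> i. - B i) (\<chi> i. B i)"
    proof
    fix v assume "v \<in> G"
    then have "\<bar>v $ i\<bar> \<le> B i" for i using B by (auto simp: G_def)
    then show "v \<in> cbox (\<chi> i. - B i) (\<chi> i. B i)" by (simp add: mem_box_cart abs_le_iff) (smt (verit))
  qed
  define K where "K = {0..T} \<times> Q \<times> cbox (\<chi> i. - B i) (\<chi> i. B i)"
  have "compact K" unfolding K_def QI by (intro compact_Times compact_cbox compact_Icc)
  moreover have "continuous_on K (\<lambda>(t, u, v). f t u v)"
    by (rule continuous_on_subset[OF f_cont]) (auto simp: K_def)
  ultimately have "compact ((\<lambda>(t, u, v). f t u v) ` K)"
    using compact_continuous_image by blast
  then obtain B0 where B0: "\<And>p. p \<in> K \<Longrightarrow> norm ((\<lambda>(t, u, v). f t u v) p) \<le> B0"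
    using compact_imp_bounded bounded_iff by (metis imageI)
  have bdd: "bdd_above {norm (f t u v) | t u v. t \<in> {0..T} \<and> u \<in> Q \<and> v \<in> G}"
  proof (rule bdd_aboveI)
    fix y assume "y \<in> {norm (f t u v) | t u v. t \<in> {0..T} \<and> u \<in> Q \<and> v \<in> G}"
    then obtain t u v where "y = norm (f t u v)" "t \<in> {0..T}" "u \<in> Q" "v \<in> G" by blast
    then show "y \<le> B0" using B0[of "(t, u, v)"] GB by (auto simp: K_def)
  qed
  have fM: "norm (f t u v) \<le> M" if "t \<in> {0..T}" "u \<in> Q" "v \<in> G" for t u v
    unfolding M_def by (rule cSup_upper[OF _ bdd]) (use that in blast)
  define cl where "cl t = max 0 (min Tb t)" for t
  define V where "V \<phi> s = (\<chi> i. Sup ((\<lambda>r. g i (\<phi> r $ i)) ` {0..s}))" for \<phi> :: "real \<Rightarrow> real^'m" and s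
  define F where "F \<phi> s = f s (\<phi> s) (V \<phi> s)" for \<phi> :: "real \<Rightarrow> real^'m" and s
  define P where "P \<phi> t = x0 + integral {0..cl t} (F \<phi>)" for \<phi> :: "real \<Rightarrow> real^'m" and t
  define Lip where "Lip \<phi> \<longleftrightarrow> \<phi> 0 = x0 \<and> (\<forall>s t. dist (\<phi> s) (\<phi> t) \<le> M * dist (cl s) (cl t))"
    for \<phi> :: "real \<Rightarrow> real^'m"
  have cl_dist: "dist (cl s) (cl t) \<le> dist s t" for s t
    by (auto simp: cl_def dist_real_def)
  have cl_in: "cl t \<in> {0..Tb}" for t using Tb_pos by (auto simp: cl_def)
  have cl_id: "t \<in> {0..Tb} \<Longrightarrow> cl t = t" for t by (auto simp: cl_def)
  have Lip_cont: "continuous_on A \<phi>" if "Lip \<phi>" for \<phi> A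
  proof -
    have "M-lipschitz_on UNIV \<phi>"
      unfolding lipschitz_on_def using that M0 cl_dist
      by (auto simp: Lip_def) (meson mult_left_mono order_trans)
    then show ?thesis by (meson continuous_on_subset lipschitz_on_continuous_on subset_UNIV)
  qed
  have Lip_Q: "\<phi> s \<in> Q" if "Lip \<phi>" for \<phi> s
  proof -
    have "dist (\<phi> s) (\<phi> 0) \<le> M * dist (cl s) (cl 0)" using that by (auto simp: Lip_def)
    also have "\<dots> \<le> M * Tb" using cl_in[of s] cl_in[of 0] M0
      by (intro mult_left_mono) (auto simp: dist_real_def)
    finally have "norm (\<phi> s - x0) \<le> \<alpha>" using MTb that by (simp add: Lip_def dist_norm)
    then have A: "\<bar>\<phi> s $ i - x0 $ i\<bar> \<le> \<alpha>" for i
      by (metis component_le_norm_cart order_trans vector_minus_component)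
    have "\<phi> s $ i \<in> I i" for i using I_def[of i] A[of i] by (auto simp: abs_le_iff)
    then show ?thesis by (auto simp: Q_def)
  qed
  have h_cont: "continuous_on A (\<lambda>r. g i (\<phi> r $ i))" if "Lip \<phi>" for \<phi> i A
    by (intro continuous_on_compose2[OF g_cont[of i]] continuous_on_compose2[OF continuous_on_component] Lip_cont[OF that]) auto
  have V_G: "V \<phi> s \<in> G" if Lp: "Lip \<phi>" and s0: "s \<ge> 0" for \<phi> s
  proof -
    have "V \<phi> s $ i \<in> g i ` I i" for i
    proof -
      obtain r where r: "r \<in> {0..s}" "\<And>y. y \<in> {0..s} \<Longrightarrow> g i (\<phi> y $ i) \<le> g i (\<phi> r $ i)"
        using continuous_attains_sup[OF compact_Icc _ h_cont[OF Lp], of 0 s i] s0 by auto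
      have "V \<phi> s $ i = g i (\<phi> r $ i)"
        unfolding V_def using r by (auto intro!: cSup_eq_maximum)
      moreover have "\<phi> r $ i \<in> I i" using Lip_Q[OF Lp] by (auto simp: Q_def)
      ultimately show ?thesis by simp
    qed
    then show ?thesis by (simp add: G_def)
  qed
  have V_lip: "\<bar>V \<phi> s $ i - V \<phi> t $ i\<bar> \<le> La * M * \<bar>s - t\<bar>" if "Lip \<phi>" "0 \<le> s" "s \<le> t" for \<phi> s t i
  proof -
    let ?h = "\<lambda>r. g i (\<phi> r $ i)"
    have bd: "bdd_above (?h ` {0..x})" for x by (rule cont_bdd_above[OF h_cont[OF that(1)]])
    have "Sup (?h ` {0..s}) \<le> Sup (?h ` {0..t}) + 0"
      by (rule sup_shift[OF _ bd]) (use that in auto)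
    moreover have "Sup (?h ` {0..t}) \<le> Sup (?h ` {0..s}) + La * M * (t - s)"
    proof (rule sup_shift[OF _ bd])
      fix r assume r: "r \<in> {0..t}"
      have "\<bar>?h r - ?h (min r s)\<bar> \<le> La * \<bar>\<phi> r $ i - \<phi> (min r s) $ i\<bar>"
        using Lip_Q[OF that(1)] by (intro g_lip) (auto simp: Q_def)
      also have "\<dots> \<le> La * dist (\<phi> r) (\<phi> (min r s))"
        using La_pos by (intro mult_left_mono) (auto simp: dist_norm intro: order_trans[OF _ component_le_norm_cart] simp del: vector_minus_component simp add: vector_minus_component[symmetric])
      also have "\<dots> \<le> La * (M * dist (cl r) (cl (min r s)))"
        using La_pos that(1) by (intro mult_left_mono) (auto simp: Lip_def)
      also have "\<dots> \<le> La * (M * (t - s))"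
        using La_pos M0 cl_dist[of r "min r s"] r that
        by (intro mult_left_mono) (auto simp: dist_real_def)
      finally show "\<exists>r'\<in>{0..s}. ?h r \<le> ?h r' + La * M * (t - s)"
        using r that by (intro bexI[of _ "min r s"]) auto
    qed (use that in auto)
    ultimately show ?thesis using that by (auto simp: V_def abs_le_iff)
  qed
  have V_cont: "continuous_on {0..} (V \<phi>)" if "Lip \<phi>" for \<phi>
  proof -
    have "continuous_on {0..} (\<lambda>s. V \<phi> s $ i)" for i
    proof -
      have "(La * M)-lipschitz_on {0..} (\<lambda>s. V \<phi> s $ i)"
        unfolding lipschitz_on_def
      proof (intro conjI ballI)
        fix s t :: real assume st: "s \<in> {0..}" "t \<in> {0..}"
        show "dist (V \<phi> s $ i) (V \<phi> t $ i) \<le> La * M * dist s t"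
        proof (cases "s \<le> t")
          case True then show ?thesis using V_lip[OF that, of s t i] st by (simp add: dist_real_def)
        next
          case False then show ?thesis using V_lip[OF that, of t s i] st by (simp add: dist_real_def abs_minus_commute)
        qed
      qed (use La_pos M0 in simp)
      then show ?thesis by (rule lipschitz_on_continuous_on)
    qed
    then have "continuous_on {0..} (\<lambda>s. \<chi> i. V \<phi> s $ i)" by (intro continuous_on_vec_lambda)
    then show ?thesis by simp
  qed
  have F_cont: "continuous_on {0..} (F \<phi>)" if "Lip \<phi>" for \<phi>
  proof -
    have "continuous_on {0..} (\<lambda>s. (s, \<phi> s, V \<phi> s))"
      by (intro continuous_intros Lip_cont[OF that] V_cont[OF that])
    from continuous_on_compose2[OF f_cont this] show ?thesis
      by (auto simp: F_def)
  qed
  have F_M: "norm (F \<phi> s) \<le> M" if "Lip \<phi>" "s \<in> {0..Tb}" for \<phi> s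
    unfolding F_def using that Tb_lt(3) by (intro fM Lip_Q V_G) auto
  have F_int: "F \<phi> integrable_on {a..b}" if "Lip \<phi>" "0 \<le> a" for \<phi> a b
    by (rule integrable_continuous_real) (rule continuous_on_subset[OF F_cont[OF that(1)]], use that in auto)
  have P_step: "norm (integral {0..b} (F \<phi>) - integral {0..a} (F \<phi>)) \<le> M * (b - a)"
    if "Lip \<phi>" "0 \<le> a" "a \<le> b" "b \<le> Tb" for \<phi> a b
  proof -
    have "integral {0..a} (F \<phi>) + integral {a..b} (F \<phi>) = integral {0..b} (F \<phi>)"
      by (rule Henstock_Kurzweil_Integration.integral_combine) (use that F_int in auto)
    then have "integral {0..b} (F \<phi>) - integral {0..a} (F \<phi>) = integral {a..b} (F \<phi>)" by (simp add: algebra_simps)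
    also have "norm \<dots> \<le> M * (b - a)"
      by (rule integral_bound) (use that in \<open>auto intro: continuous_on_subset[OF F_cont] F_M\<close>)
    finally show ?thesis .
  qed
  have P_Lip: "Lip (P \<phi>)" if "Lip \<phi>" for \<phi>
    unfolding Lip_def
  proof (intro conjI allI)
    show "P \<phi> 0 = x0" using Tb_pos by (simp add: P_def cl_def)
    fix s t
    show "dist (P \<phi> s) (P \<phi> t) \<le> M * dist (cl s) (cl t)"
    proof (cases "cl s \<le> cl t")
      case True
      then show ?thesis using P_step[OF that, of "cl s" "cl t"] cl_in[of s] cl_in[of t]
        by (simp add: P_def dist_norm dist_real_def norm_minus_commute)
    next
      case False
      then show ?thesis using P_step[OF that, of "cl t" "cl s"] cl_in[of s] cl_in[of t]
        by (simp add: P_def dist_norm dist_real_def)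
    qed
  qed
  have Lip_bcont: "\<phi> \<in> bcontfun" if "Lip \<phi>" for \<phi>
  proof (rule bcontfun_normI[OF Lip_cont[OF that]])
    fix t
    have "dist (\<phi> t) (\<phi> 0) \<le> M * dist (cl t) (cl 0)" using that by (auto simp: Lip_def)
    also have "\<dots> \<le> M * Tb" using cl_in[of t] cl_in[of 0] M0
      by (intro mult_left_mono) (auto simp: dist_real_def)
    finally have "norm (\<phi> t - x0) \<le> M * Tb" using that by (simp add: Lip_def dist_norm)
    then show "norm (\<phi> t) \<le> norm x0 + M * Tb"
      using norm_triangle_ineq[of "\<phi> t - x0" x0] by simp
  qed
  have contr: "dist (P \<phi> t) (P \<psi> t) \<le> c * d"
    if "Lip \<phi>" "Lip \<psi>" "\<And>s. dist (\<phi> s) (\<psi> s) \<le> d" for \<phi> \<psi> d t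
  proof -
    have d0: "0 \<le> d" using that(3)[of 0] by (meson dual_order.trans zero_le_dist)
    have "P \<phi> t - P \<psi> t = integral {0..cl t} (\<lambda>s. F \<phi> s - F \<psi> s)"
      unfolding P_def by (subst integral_diff) (use F_int that in auto)
    also have "norm \<dots> \<le> (LT * (1 + La * sqrt m) * d) * (cl t - 0)"
    proof (rule integral_bound)
      show "continuous_on {0..cl t} (\<lambda>s. F \<phi> s - F \<psi> s)"
        by (intro continuous_intros continuous_on_subset[OF F_cont] that) auto
      fix s assume s: "s \<in> {0..cl t}"
      then have s': "s \<in> {0..Tb}" using cl_in[of t] by auto
      have Vd: "norm (V \<phi> s - V \<psi> s) \<le> sqrt m * (La * d)"
        unfolding m_def
      proof (rule norm_vec_bound)
        fix i
        let ?h = "\<lambda>\<phi> r. g i (\<phi> r $ i)"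
        have bd: "bdd_above (?h \<phi> ` {0..s})" "bdd_above (?h \<psi> ` {0..s})"
          by (rule cont_bdd_above[OF h_cont[OF that(1)]]) (rule cont_bdd_above[OF h_cont[OF that(2)]])
        have hd: "\<bar>?h \<phi> r - ?h \<psi> r\<bar> \<le> La * d" if "r \<in> {0..s}" for r
        proof -
          have "\<bar>?h \<phi> r - ?h \<psi> r\<bar> \<le> La * \<bar>\<phi> r $ i - \<psi> r $ i\<bar>"
            using Lip_Q[OF \<open>Lip \<phi>\<close>] Lip_Q[OF \<open>Lip \<psi>\<close>] by (intro g_lip) (auto simp: Q_def)
          also have "\<dots> \<le> La * d"
            using La_pos \<open>\<And>s. dist (\<phi> s) (\<psi> s) \<le> d\<close>[of r]
            by (intro mult_left_mono) (auto simp: dist_norm intro: norm_bound_component_le_cart simp del: vector_minus_component simp add: vector_minus_component[symmetric])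
          finally show ?thesis .
        qed
        have hd1: "\<exists>r'\<in>{0..s}. ?h \<phi> r \<le> ?h \<psi> r' + La * d" if r: "r \<in> {0..s}" for r
          using hd[OF r] r by (intro bexI[of _ r]) (auto simp: abs_le_iff)
        have hd2: "\<exists>r'\<in>{0..s}. ?h \<psi> r \<le> ?h \<phi> r' + La * d" if r: "r \<in> {0..s}" for r
          using hd[OF r] r by (intro bexI[of _ r]) (auto simp: abs_le_iff)
        have "Sup (?h \<phi> ` {0..s}) \<le> Sup (?h \<psi> ` {0..s}) + La * d"
          by (rule sup_shift[OF _ bd(2) hd1]) (use s' in auto)
        moreover have "Sup (?h \<psi> ` {0..s}) \<le> Sup (?h \<phi> ` {0..s}) + La * d"
          by (rule sup_shift[OF _ bd(1) hd2]) (use s' in auto)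
        ultimately show "\<bar>(V \<phi> s - V \<psi> s) $ i\<bar> \<le> La * d" by (auto simp: V_def abs_le_iff)
      qed
      have "norm (F \<phi> s - F \<psi> s) \<le> LT * (norm (\<phi> s - \<psi> s) + norm (V \<phi> s - V \<psi> s))"
        unfolding F_def using s' Tb_lt(3) by (intro f_lip Lip_Q V_G that) auto
      also have "\<dots> \<le> LT * (d + sqrt m * (La * d))"
        using LT_pos Vd that(3)[of s] by (intro mult_left_mono add_mono) (auto simp: dist_norm)
      finally show "norm (F \<phi> s - F \<psi> s) \<le> LT * (1 + La * sqrt m) * d"
        by (simp add: algebra_simps)
    qed (use cl_in in auto)
    also have "\<dots> \<le> (LT * (1 + La * sqrt m) * d) * Tb"
      using cl_in[of t] K0 d0 by (intro mult_left_mono) auto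
    also have "\<dots> = c * d" by (simp add: c_def)
    finally show ?thesis by (simp add: dist_norm)
  qed
  define S where "S = {\<phi> :: real \<Rightarrow>\<^sub>C (real^'m). Lip (apply_bcontfun \<phi>)}"
  define \<Phi> where "\<Phi> \<phi> = Bcontfun (P (apply_bcontfun \<phi>))" for \<phi> :: "real \<Rightarrow>\<^sub>C (real^'m)"
  have \<Phi>_app: "apply_bcontfun (\<Phi> \<phi>) = P (apply_bcontfun \<phi>)" if "\<phi> \<in> S" for \<phi>
    unfolding \<Phi>_def using that P_Lip Lip_bcont by (simp add: S_def Bcontfun_inverse)
  have "closed S"
  proof -
    have "S = {\<phi>. apply_bcontfun \<phi> 0 = x0} \<inter>
      (\<Inter>s. \<Inter>t. {\<phi>. dist (apply_bcontfun \<phi> s) (apply_bcontfun \<phi> t) \<le> M * dist (cl s) (cl t)})"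
      by (auto simp: S_def Lip_def)
    also have "closed \<dots>"
      by (intro closed_Int closed_INT ballI closed_Collect_eq closed_Collect_le continuous_intros
          continuous_on_dist eval_cont)
    finally show ?thesis .
  qed
  then have "complete S" by (simp add: complete_eq_closed)
  moreover have "S \<noteq> {}"
  proof -
    have "Lip (\<lambda>_. x0)" using M0 by (simp add: Lip_def)
    then have "Bcontfun (\<lambda>_. x0) \<in> S" using Lip_bcont by (simp add: S_def Bcontfun_inverse)
    then show ?thesis by blast
  qed
  moreover have "\<Phi> ` S \<subseteq> S"
    using \<Phi>_app P_Lip by (auto simp: S_def)
  moreover have "dist (\<Phi> \<phi>) (\<Phi> \<psi>) \<le> c * dist \<phi> \<psi>" if "\<phi> \<in> S" "\<psi> \<in> S" for \<phi> \<psi>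
    by (rule dist_bound) (use that in \<open>auto simp: \<Phi>_app S_def intro!: contr dist_bounded\<close>)
  ultimately obtain \<phi> where \<phi>: "\<phi> \<in> S" "\<Phi> \<phi> = \<phi>"
    using Banach_fix[OF _ _ c0 c1, of S \<Phi>] by blast
  define x where "x = apply_bcontfun \<phi>"
  have Lx: "Lip x" using \<phi> by (simp add: S_def x_def)
  have xP: "x t = P x t" for t using \<Phi>_app[OF \<phi>(1)] \<phi>(2) by (simp add: x_def)
  show ?thesis
  proof (intro exI conjI ballI)
    show "continuous_on {0..Tb} (F x)" by (rule continuous_on_subset[OF F_cont[OF Lx]]) auto
    show "x 0 = x0" using Lx by (simp add: Lip_def)
    fix t assume t: "t \<in> {0..Tb}"
    show "F x t = f t (x t) (\<chi> i. Sup ((\<lambda>s. g i (x s $ i)) ` {0..t}))"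
      by (simp add: F_def V_def)
    have "((\<lambda>u. x0 + integral {0..u} (F x)) has_vector_derivative (0 + F x t)) (at t within {0..Tb})"
      by (intro has_vector_derivative_add has_vector_derivative_const integral_has_vector_derivative t
          continuous_on_subset[OF F_cont[OF Lx]]) auto
    show "(x has_vector_derivative F x t) (at t within {0..Tb})"
    proof (rule has_vector_derivative_transform[OF t])
      fix u assume u: "u \<in> {0..Tb}"
      have "x u = P x u" by (rule xP)
      also have "\<dots> = x0 + integral {0..u} (F x)" unfolding P_def cl_id[OF u] ..
      finally show "x u = x0 + integral {0..u} (F x)" .
    qed (use \<open>((\<lambda>u. x0 + integral {0..u} (F x)) has_vector_derivative (0 + F x t)) (at t within {0..Tb})\<close> in simp)
  qed
qed

end
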